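(* Let $1\le k\le n-1$ and let $T$ be a tableau of shape $k\times(n-k)$. Then there is a unique multiset $\varphi_{NN}(T)$ of pairwise nonnesting vectors in $V^*_{k,n}$ whose summing tableau is $T$, and there is a unique multiset $\varphi_{NC}(T)$ of pairwise noncrossing vectors in $V^*_{k,n}$ whose summing tableau is $T$. (Equal vectors are considered both nonnesting and noncrossing with each other.)
   Context: $V_{k,n}$ denotes the set of integer vectors $I=(i_1,\dots,i_k)$ with $1\le i_1<\dots<i_k\le n$, and $V^*_{k,n}=V_{k,n}\setminus\{(n-k+1,\dots,n)\}$. Two arcs $(p<p')$, $(q<q')$ cross if $p<q<p'<q'$ or $q<p<q'<p'$; they nest if $p<q<q'<p'$ or $q<p<p'<q'$. $I,J\in V_{k,n}$ are noncrossing if for all $1\le a<b\le k$ with $i_\ell=j_\ell$ for all $a<\ell<b$, the arcs $(i_a<i_b)$ and $(j_a<j_b)$ do not cross; they are nonnesting if for all $1\le a<b\le k$ these arcs do not nest (equivalently $I\le J$ or $J\le I$ componentwise). A tableau of shape $k\times(n-k)$ is an array $T=(t_{a,b})_{a\in[k],b\in[n-k]}$ of nonnegative integers with $t_{a,b}\le t_{a,b+1}$ and $t_{a+1,b}\le t_{a,b}$ (rows indexed from top to bottom). The summing tableau of a finite multiset $L$ of vectors in $V_{k,n}$ is $t_{a,b}=\#\{I\in L : i_a\le a+b-1\}$ (counted with multiplicity); equivalently it is $\sum_{I\in L}\chi_I$ where $(\chi_I)_{a,b}=1$ if $i_a\le a+b-1$ and $0$ otherwise. *)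

theory Defs
  imports Main "HOL-Library.Multiset"
begin

text \<open>A vector I = (i_1,...,i_k) is represented as a list of naturals of length k;
  the 1-indexed entry i_a is ent I a = I ! (a - 1).\<close>

definition ent :: "nat list \<Rightarrow> nat \<Rightarrow> nat" where
  "ent I a = I ! (a - 1)"

definition Vkn :: "nat \<Rightarrow> nat \<Rightarrow> nat list set" where
  "Vkn k n = {I. length I = k \<and> sorted_wrt (<) I \<and> set I \<subseteq> {1..n}}"

definition Vstar :: "nat \<Rightarrow> nat \<Rightarrow> nat list set" where
  "Vstar k n = Vkn k n - {[n - k + 1 ..< n + 1]}"

definition arcs_cross :: "nat \<Rightarrow> nat \<Rightarrow> nat \<Rightarrow> nat \<Rightarrow> bool" where
  "arcs_cross p p' q q' \<longleftrightarrow> (p < q \<and> q < p' \<and> p' < q') \<or> (q < p \<and> p < q' \<and> q' < p')"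

definition arcs_nest :: "nat \<Rightarrow> nat \<Rightarrow> nat \<Rightarrow> nat \<Rightarrow> bool" where
  "arcs_nest p p' q q' \<longleftrightarrow> (p < q \<and> q < q' \<and> q' < p') \<or> (q < p \<and> p < p' \<and> p' < q')"

definition noncrossing :: "nat \<Rightarrow> nat list \<Rightarrow> nat list \<Rightarrow> bool" where
  "noncrossing k I J \<longleftrightarrow>
     (\<forall>a b. 1 \<le> a \<and> a < b \<and> b \<le> k \<and> (\<forall>l. a < l \<and> l < b \<longrightarrow> ent I l = ent J l)
        \<longrightarrow> \<not> arcs_cross (ent I a) (ent I b) (ent J a) (ent J b))"

definition nonnesting :: "nat \<Rightarrow> nat list \<Rightarrow> nat list \<Rightarrow> bool" where
  "nonnesting k I J \<longleftrightarrow>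
     (\<forall>a b. 1 \<le> a \<and> a < b \<and> b \<le> k
        \<longrightarrow> \<not> arcs_nest (ent I a) (ent I b) (ent J a) (ent J b))"

text \<open>Tableau of shape k x (n-k): entries t a b for a in [k], b in [n-k];
  values outside this range are irrelevant.\<close>

definition is_tableau :: "nat \<Rightarrow> nat \<Rightarrow> (nat \<Rightarrow> nat \<Rightarrow> nat) \<Rightarrow> bool" where
  "is_tableau k n T \<longleftrightarrow>
     (\<forall>a b. 1 \<le> a \<and> a \<le> k \<and> 1 \<le> b \<and> b < n - k \<longrightarrow> T a b \<le> T a (b + 1)) \<and>
     (\<forall>a b. 1 \<le> a \<and> a < k \<and> 1 \<le> b \<and> b \<le> n - k \<longrightarrow> T (a + 1) b \<le> T a b)"

definition summing_tableau :: "nat list multiset \<Rightarrow> nat \<Rightarrow> nat \<Rightarrow> nat" where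
  "summing_tableau L a b = size (filter_mset (\<lambda>I. ent I a \<le> a + b - 1) L)"

definition has_summing_tableau :: "nat \<Rightarrow> nat \<Rightarrow> nat list multiset \<Rightarrow> (nat \<Rightarrow> nat \<Rightarrow> nat) \<Rightarrow> bool" where
  "has_summing_tableau k n L T \<longleftrightarrow>
     (\<forall>a b. 1 \<le> a \<and> a \<le> k \<and> 1 \<le> b \<and> b \<le> n - k \<longrightarrow> summing_tableau L a b = T a b)"

end

theory Submission
  imports Defs
begin


lemma size_filter_mono:
  assumes "\<And>x. x \<in># M \<Longrightarrow> P x \<Longrightarrow> Q x"
  shows "size (filter_mset P M) \<le> size (filter_mset Q M)"
  using assms by (induction M) auto

lemma size_filter_all:
  assumes "\<And>x. x \<in># M \<Longrightarrow> P x"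
  shows "size (filter_mset P M) = size M"
  using assms by (induction M) auto

lemma cum_eq_mset:
  fixes M M' :: "nat multiset"
  assumes "\<And>t. size (filter_mset (\<lambda>x. x \<le> t) M) = size (filter_mset (\<lambda>x. x \<le> t) M')"
  shows "M = M'"
proof -
  have c: "size (filter_mset (\<lambda>x. x \<le> Suc v) N) = size (filter_mset (\<lambda>x. x \<le> v) N) + count N (Suc v)"
    for N :: "nat multiset" and v
  proof -
    have "filter_mset (\<lambda>x. x \<le> Suc v) N = filter_mset (\<lambda>x. x \<le> v) N + filter_mset (\<lambda>x. x = Suc v) N"
      by (induction N) auto
    then show ?thesis by (simp add: filter_eq_replicate_mset)
  qed
  have c0: "size (filter_mset (\<lambda>x. x \<le> 0) N) = count N 0" for N :: "nat multiset"
  proof -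
    have "filter_mset (\<lambda>x. x \<le> 0) N = filter_mset (\<lambda>x. x = 0) N" by (induction N) auto
    then show ?thesis by (simp add: filter_eq_replicate_mset)
  qed
  have "count M v = count M' v" for v
  proof (cases v)
    case 0 then show ?thesis using c0 assms by metis
  next
    case (Suc u) then show ?thesis using c[of u M] c[of u M'] assms[of u] assms[of "Suc u"] by simp
  qed
  then show ?thesis by (simp add: multiset_eq_iff)
qed

lemma sorted_nth_gap:
  assumes "sorted_wrt (<) (xs::nat list)" "i \<le> j" "j < length xs"
  shows "xs ! i + (j - i) \<le> xs ! j"
  using assms(2,3)
proof (induction j)
  case 0 then show ?case by simp
next
  case (Suc j)
  show ?case
  proof (cases "i = Suc j")
    case True then show ?thesis by simp
  next
    case False
    then have "i \<le> j" using Suc by simp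
    then have "xs ! i + (j - i) \<le> xs ! j" using Suc by simp
    moreover have "xs ! j < xs ! Suc j" using assms(1) Suc.prems by (simp add: sorted_wrt_iff_nth_less)
    ultimately show ?thesis using \<open>i \<le> j\<close> by simp
  qed
qed

lemma Vkn_ent_bounds:
  assumes "I \<in> Vkn k n" "1 \<le> a" "a \<le> k"
  shows "a \<le> ent I a" "ent I a \<le> n - k + a" "k \<le> n"
proof -
  have l: "length I = k" and s: "sorted_wrt (<) I" and r: "set I \<subseteq> {1..n}"
    using assms(1) by (auto simp: Vkn_def)
  have i0: "1 \<le> I ! 0" using r l assms by (metis atLeastAtMost_iff nth_mem order_less_le_trans subsetD zero_less_one le_less diff_is_0_eq' not_one_le_zero linorder_not_less nat_neq_iff)
  have g1: "I ! 0 + (a - 1 - 0) \<le> I ! (a - 1)" using sorted_nth_gap[OF s, of 0 "a-1"] l assms by simp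
  then show "a \<le> ent I a" using i0 assms by (simp add: ent_def)
  have g2: "I ! (a - 1) + (k - 1 - (a - 1)) \<le> I ! (k - 1)" using sorted_nth_gap[OF s, of "a-1" "k-1"] l assms by simp
  have "I ! (k - 1) \<le> n" using r l assms by (metis atLeastAtMost_iff diff_less less_le_trans nth_mem subsetD zero_less_one)
  then show "ent I a \<le> n - k + a" "k \<le> n" using g2 assms g1 i0 by (auto simp: ent_def)
qed

lemma Vstar_first:
  assumes "I \<in> Vstar k n" "1 \<le> k"
  shows "ent I 1 \<le> n - k"
proof (rule ccontr)
  assume nt: "\<not> ent I 1 \<le> n - k"
  have V: "I \<in> Vkn k n" and ne: "I \<noteq> [n - k + 1 ..< n + 1]" using assms by (auto simp: Vstar_def)
  have l: "length I = k" and s: "sorted_wrt (<) I" using V by (auto simp: Vkn_def)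
  have kn: "k \<le> n" using Vkn_ent_bounds[OF V, of 1] assms by simp
  have e1: "ent I 1 = n - k + 1" using Vkn_ent_bounds[OF V, of 1] assms nt by simp
  have "I ! i = n - k + 1 + i" if "i < k" for i
  proof -
    have "I ! 0 + (i - 0) \<le> I ! i" using sorted_nth_gap[OF s, of 0 i] l that by simp
    moreover have "ent I (Suc i) \<le> n - k + Suc i" using Vkn_ent_bounds[OF V, of "Suc i"] that by simp
    ultimately show ?thesis using e1 by (simp add: ent_def)
  qed
  then have "I = [n - k + 1 ..< n + 1]" using l kn by (intro nth_equalityI) (auto simp del: upt_Suc)
  then show False using ne by simp
qed

definition col :: "nat \<Rightarrow> nat list multiset \<Rightarrow> nat multiset" where
  "col a L = image_mset (\<lambda>I. ent I a) L"

lemma summing_col: "summing_tableau L a b = size (filter_mset (\<lambda>x. x \<le> a + b - 1) (col a L))"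
  by (simp add: summing_tableau_def col_def filter_mset_image_mset)

lemma size_from_T:
  assumes "set_mset L \<subseteq> Vstar k n" "1 \<le> k" "has_summing_tableau k n L T" "k \<le> n - 1"
  shows "size L = T 1 (n - k)"
proof -
  have "summing_tableau L 1 (n - k) = size L"
    unfolding summing_tableau_def using assms Vstar_first[of _ k n]
    by (intro size_filter_all) auto
  then show ?thesis using assms by (auto simp: has_summing_tableau_def)
qed

lemma coldet:
  assumes "set_mset L \<subseteq> Vstar k n" "set_mset L' \<subseteq> Vstar k n" "1 \<le> k" "k \<le> n - 1"
    "has_summing_tableau k n L T" "has_summing_tableau k n L' T"
  shows "size L = size L'" "\<And>a. 1 \<le> a \<Longrightarrow> a \<le> k \<Longrightarrow> col a L = col a L'"
proof -
  show sz: "size L = size L'" using size_from_T[OF assms(1,3,5,4)] size_from_T[OF assms(2,3,6,4)] by simp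
  fix a assume a: "1 \<le> a" "a \<le> k"
  have bnd: "a \<le> x \<and> x \<le> n - k + a" if "x \<in># col a M" "set_mset M \<subseteq> Vstar k n" for x M
    using that Vkn_ent_bounds[of _ k n a] a by (auto simp: col_def Vstar_def)
  have "size (filter_mset (\<lambda>x. x \<le> t) (col a L)) = size (filter_mset (\<lambda>x. x \<le> t) (col a L'))" for t
  proof -
    consider "t < a" | "a \<le> t" "t < n - k + a" | "n - k + a \<le> t" by linarith
    then show ?thesis
    proof cases
      case 1
      have "filter_mset (\<lambda>x. x \<le> t) (col a M) = {#}" if "set_mset M \<subseteq> Vstar k n" for M
        using bnd[OF _ that] 1 by (force simp: filter_mset_eq_mempty_iff)
      note e = this[OF assms(1)] this[OF assms(2)]
      show ?thesis by (simp only: e)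
    next
      case 2
      define b where "b = t - a + 1"
      have b: "1 \<le> b" "b \<le> n - k" "t = a + b - 1" using 2 by (auto simp: b_def)
      have "summing_tableau L a b = T a b" "summing_tableau L' a b = T a b"
        using assms(5,6) a b unfolding has_summing_tableau_def by auto
      then show ?thesis unfolding summing_col b(3) by simp
    next
      case 3
      have "size (filter_mset (\<lambda>x. x \<le> t) (col a M)) = size M" if "set_mset M \<subseteq> Vstar k n" for M
        using bnd[OF _ that] 3 by (subst size_filter_all) (force simp: col_def)+
      then show ?thesis using assms sz by simp
    qed
  qed
  then show "col a L = col a L'" by (rule cum_eq_mset)
qed


definition cle :: "nat \<Rightarrow> nat list \<Rightarrow> nat list \<Rightarrow> bool" where
  "cle k I J \<longleftrightarrow> (\<forall>a. 1 \<le> a \<and> a \<le> k \<longrightarrow> ent I a \<le> ent J a)"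

lemma ent_mono_sorted:
  assumes "sorted_wrt (<) I" "length I = k" "1 \<le> a" "a < b" "b \<le> k"
  shows "ent I a < ent I b"
  using assms unfolding ent_def sorted_wrt_iff_nth_less by auto

lemma nonnesting_cmp:
  assumes "sorted_wrt (<) I" "length I = k" "sorted_wrt (<) J" "length J = k" "nonnesting k I J"
  shows "cle k I J \<or> cle k J I"
proof (rule ccontr)
  assume "\<not> ?thesis"
  then obtain a b where a: "1 \<le> a" "a \<le> k" "ent J a < ent I a" and b: "1 \<le> b" "b \<le> k" "ent I b < ent J b"
    unfolding cle_def by (meson not_le)
  have "a \<noteq> b" using a b by auto
  then consider "a < b" | "b < a" by linarith
  then show False
  proof cases
    case 1
    have "ent I a < ent I b" using ent_mono_sorted[OF assms(1,2)] 1 a b by auto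
    then have "arcs_nest (ent I a) (ent I b) (ent J a) (ent J b)" using a b unfolding arcs_nest_def by auto
    then show False using assms(5) 1 a b unfolding nonnesting_def by auto
  next
    case 2
    have "ent J b < ent J a" using ent_mono_sorted[OF assms(3,4)] 2 a b by auto
    then have "arcs_nest (ent I b) (ent I a) (ent J b) (ent J a)" using a b unfolding arcs_nest_def by auto
    then show False using assms(5) 2 a b unfolding nonnesting_def by auto
  qed
qed

lemma cmp_nonnesting:
  assumes "cle k I J \<or> cle k J I"
  shows "nonnesting k I J"
  unfolding nonnesting_def
proof (intro allI impI)
  fix a b assume ab: "1 \<le> a \<and> a < b \<and> b \<le> k"
  then have "ent I a \<le> ent J a \<and> ent I b \<le> ent J b \<or> ent J a \<le> ent I a \<and> ent J b \<le> ent I b"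
    using assms unfolding cle_def by auto
  then show "\<not> arcs_nest (ent I a) (ent I b) (ent J a) (ent J b)" unfolding arcs_nest_def by auto
qed

lemma nn_unique:
  "\<lbrakk>\<forall>I\<in>#L. length I = k; \<forall>I\<in>#L'. length I = k;
    \<forall>I\<in>#L. \<forall>J\<in>#L. cle k I J \<or> cle k J I; \<forall>I\<in>#L'. \<forall>J\<in>#L'. cle k I J \<or> cle k J I;
    \<forall>a. 1 \<le> a \<and> a \<le> k \<longrightarrow> col a L = col a L'; size L = size L'\<rbrakk> \<Longrightarrow> L = L'"
proof (induction "size L" arbitrary: L L')
  case 0 then show ?case by simp
next
  case (Suc s)
  have maxel: "\<exists>m\<in>#M. \<forall>a. 1 \<le> a \<and> a \<le> k \<longrightarrow> ent m a = Max (set_mset (col a M))"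
    if ne: "M \<noteq> {#}" and ch: "\<forall>I\<in>#M. \<forall>J\<in>#M. cle k I J \<or> cle k J I" for M
  proof -
    define f where "f I = (\<Sum>a\<in>{1..k}. ent I a)" for I
    obtain m where m: "m \<in># M" "\<forall>x\<in>#M. f x \<le> f m"
    proof -
      have "Max (f ` set_mset M) \<in> f ` set_mset M" using ne by (intro Max_in) auto
      then obtain m where "m \<in># M" "f m = Max (f ` set_mset M)" by auto
      then show ?thesis using that by (metis Max_ge finite_imageI finite_set_mset image_eqI)
    qed
    have up: "cle k I m" if "I \<in># M" for I
    proof (rule ccontr)
      assume nc: "\<not> cle k I m"
      then have c: "cle k m I" using ch m(1) that by blast
      obtain a where a0: "1 \<le> a" "a \<le> k" "\<not> ent I a \<le> ent m a" using nc unfolding cle_def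
        by blast
      then have a: "1 \<le> a" "a \<le> k" "ent m a < ent I a" by auto
      have "f m < f I" unfolding f_def
        using c a by (intro sum_strict_mono_ex1) (auto simp: cle_def)
      then show False using m that by force
    qed
    show ?thesis
    proof (intro bexI[OF _ m(1)] allI impI)
      fix a assume a: "1 \<le> a \<and> a \<le> k"
      show "ent m a = Max (set_mset (col a M))"
        using up a m(1) unfolding col_def cle_def
        by (intro Max_eqI[symmetric]) auto
    qed
  qed
  have ne: "L \<noteq> {#}" "L' \<noteq> {#}" using Suc.hyps(2) Suc.prems(6) by auto
  obtain m where m: "m \<in># L" "\<forall>a. 1 \<le> a \<and> a \<le> k \<longrightarrow> ent m a = Max (set_mset (col a L))"
    using maxel[OF ne(1)] Suc.prems(3) by blast
  obtain m' where m': "m' \<in># L'" "\<forall>a. 1 \<le> a \<and> a \<le> k \<longrightarrow> ent m' a = Max (set_mset (col a L'))"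
    using maxel[OF ne(2)] Suc.prems(4) by blast
  have "m = m'"
  proof (rule nth_equalityI)
    show "length m = length m'" using m(1) m'(1) Suc.prems(1,2) by simp
    fix i assume "i < length m"
    then have "1 \<le> Suc i \<and> Suc i \<le> k" using m(1) Suc.prems(1) by simp
    then have "ent m (Suc i) = ent m' (Suc i)" using m(2) m'(2) Suc.prems(5) by metis
    then show "m ! i = m' ! i" by (simp add: ent_def)
  qed
  obtain L0 where L0: "L = add_mset m L0" using m(1) by (metis multi_member_split)
  obtain L0' where L0': "L' = add_mset m L0'" using m'(1) \<open>m = m'\<close> by (metis multi_member_split)
  have "L0 = L0'"
  proof (rule Suc.hyps(1))
    show "s = size L0" using Suc.hyps(2) L0 by simp
    show "\<forall>I\<in>#L0. length I = k" "\<forall>I\<in>#L0'. length I = k" using Suc.prems(1,2) L0 L0' by auto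
    show "\<forall>I\<in>#L0. \<forall>J\<in>#L0. cle k I J \<or> cle k J I" "\<forall>I\<in>#L0'. \<forall>J\<in>#L0'. cle k I J \<or> cle k J I"
      using Suc.prems(3,4) L0 L0' by auto
    show "\<forall>a. 1 \<le> a \<and> a \<le> k \<longrightarrow> col a L0 = col a L0'" using Suc.prems(5) L0 L0' by (auto simp: col_def)
    show "size L0 = size L0'" using Suc.prems(6) L0 L0' by simp
  qed
  then show ?case using L0 L0' by simp
qed


lemma filter_le_upt: "filter (\<lambda>m. m \<le> t) [1..<Suc N] = [1..<Suc (min t N)]"
  by (induction N) auto

lemma size_filter_mset_list: "size (filter_mset P (mset xs)) = length (filter P xs)"
  by (induction xs) auto

locale tab =
  fixes k n :: nat and T :: "nat \<Rightarrow> nat \<Rightarrow> nat"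
  assumes k1: "1 \<le> k" and kn: "k \<le> n - 1" and tab: "is_tableau k n T"
begin

abbreviation "w \<equiv> n - k"

lemma rowmono: "1 \<le> a \<Longrightarrow> a \<le> k \<Longrightarrow> 1 \<le> b \<Longrightarrow> b \<le> b' \<Longrightarrow> b' \<le> w \<Longrightarrow> T a b \<le> T a b'"
proof (induction b')
  case 0 then show ?case by simp
next
  case (Suc b')
  show ?case
  proof (cases "b = Suc b'")
    case True then show ?thesis by simp
  next
    case False
    then have "T a b \<le> T a b'" using Suc by simp
    also have "T a b' \<le> T a (b' + 1)" using tab Suc.prems False unfolding is_tableau_def by auto
    finally show ?thesis by simp
  qed
qed

lemma colmono: "1 \<le> a \<Longrightarrow> a \<le> a' \<Longrightarrow> a' \<le> k \<Longrightarrow> 1 \<le> b \<Longrightarrow> b \<le> w \<Longrightarrow> T a' b \<le> T a b"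
proof (induction a')
  case 0 then show ?case by simp
next
  case (Suc a')
  show ?case
  proof (cases "a = Suc a'")
    case True then show ?thesis by simp
  next
    case False
    then have "T a' b \<le> T a b" using Suc by simp
    moreover have "T (a' + 1) b \<le> T a' b" using tab Suc.prems False unfolding is_tableau_def by auto
    ultimately show ?thesis by simp
  qed
qed

definition r :: "nat \<Rightarrow> nat \<Rightarrow> nat" where
  "r a m = card {b\<in>{1..w}. T a b < m}"

lemma r_le: "r a m \<le> w"
proof -
  have "r a m \<le> card {1..w}" unfolding r_def by (intro card_mono) auto
  then show ?thesis by simp
qed

lemma r_key:
  assumes "1 \<le> a" "a \<le> k" "1 \<le> b" "b \<le> w"
  shows "r a m < b \<longleftrightarrow> m \<le> T a b"
proof
  assume "m \<le> T a b"
  have "{b'\<in>{1..w}. T a b' < m} \<subseteq> {1..b - 1}"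
  proof
    fix b' assume b': "b' \<in> {b'\<in>{1..w}. T a b' < m}"
    have "\<not> b \<le> b'"
    proof
      assume "b \<le> b'"
      then have "T a b \<le> T a b'" using rowmono assms b' by auto
      then show False using b' \<open>m \<le> T a b\<close> by auto
    qed
    then show "b' \<in> {1..b - 1}" using b' by auto
  qed
  then have "r a m \<le> card {1..b - 1}" unfolding r_def by (intro card_mono) auto
  then show "r a m < b" using assms by simp
next
  assume "r a m < b"
  show "m \<le> T a b"
  proof (rule ccontr)
    assume "\<not> m \<le> T a b"
    then have "{1..b} \<subseteq> {b'\<in>{1..w}. T a b' < m}"
      using rowmono[OF assms(1,2)] assms by force
    then have "card {1..b} \<le> r a m" unfolding r_def by (intro card_mono) auto
    then show False using \<open>r a m < b\<close> by simp
  qed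
qed

lemma r_mono_m: "m \<le> m' \<Longrightarrow> r a m \<le> r a m'"
  unfolding r_def by (intro card_mono) auto

lemma r_mono_a: "1 \<le> a \<Longrightarrow> a \<le> a' \<Longrightarrow> a' \<le> k \<Longrightarrow> r a m \<le> r a' m"
  unfolding r_def using colmono by (intro card_mono) (auto intro: le_less_trans)

definition f :: "nat \<Rightarrow> nat list" where
  "f m = map (\<lambda>a. a + r a m) [1..<Suc k]"

lemma f_len: "length (f m) = k" by (simp add: f_def)

lemma f_ent: "1 \<le> a \<Longrightarrow> a \<le> k \<Longrightarrow> ent (f m) a = a + r a m"
proof -
  assume a: "1 \<le> a" "a \<le> k"
  have "[1..<Suc k] ! (a - 1) = a" using nth_upt[of 1 "a - 1" "Suc k"] a by (simp del: upt_Suc)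
  then show ?thesis using a by (simp add: f_def ent_def del: upt_Suc)
qed

definition N where "N = T 1 w"

definition L0 where "L0 = image_mset f (mset [1..<Suc N])"

lemma f_sorted: "sorted_wrt (<) (f m)"
  unfolding sorted_wrt_iff_nth_less
proof (intro allI impI)
  fix i j assume ij: "i < j" "j < length (f m)"
  then have "f m ! i = ent (f m) (Suc i)" "f m ! j = ent (f m) (Suc j)" by (simp_all add: ent_def)
  moreover have "ent (f m) (Suc i) < ent (f m) (Suc j)"
    using ij r_mono_a[of "Suc i" "Suc j" m] by (simp add: f_ent f_len)
  ultimately show "f m ! i < f m ! j" by simp
qed

lemma f_Vstar: assumes "1 \<le> m" "m \<le> N" shows "f m \<in> Vstar k n"
proof -
  have "set (f m) \<subseteq> {1..n}"
  proof
    fix x assume "x \<in> set (f m)"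
    then obtain a where a: "a \<in> {1..<Suc k}" "x = a + r a m" by (auto simp: f_def simp del: upt_Suc)
    then show "x \<in> {1..n}" using r_le[of a m] kn by auto
  qed
  then have V: "f m \<in> Vkn k n" using f_sorted f_len by (simp add: Vkn_def)
  have w1: "1 \<le> w" using kn k1 by simp
  have "r 1 m < w" using r_key[of 1 w m] k1 w1 assms by (simp add: N_def)
  then have e1: "ent (f m) 1 \<noteq> w + 1" using f_ent[of 1 m] k1 by simp
  have te: "ent [n - k + 1 ..< n + 1] 1 = w + 1" using k1 kn by (simp add: ent_def del: upt_Suc)
  have "f m \<noteq> [n - k + 1 ..< n + 1]"
  proof
    assume eq: "f m = [n - k + 1 ..< n + 1]"
    show False using e1 te unfolding eq by simp
  qed
  then show ?thesis using V by (simp add: Vstar_def)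
qed

lemma f_cle: "m \<le> m' \<Longrightarrow> cle k (f m) (f m')"
  unfolding cle_def using r_mono_m by (auto simp: f_ent)

lemma T_le_N: "1 \<le> a \<Longrightarrow> a \<le> k \<Longrightarrow> 1 \<le> b \<Longrightarrow> b \<le> w \<Longrightarrow> T a b \<le> N"
proof -
  assume ab: "1 \<le> a" "a \<le> k" "1 \<le> b" "b \<le> w"
  have "T a b \<le> T 1 b" using colmono[of 1 a b] ab by simp
  moreover have "T 1 b \<le> T 1 w" using rowmono[of 1 b w] ab k1 by simp
  ultimately show ?thesis unfolding N_def by simp
qed

lemma L0_sum: "has_summing_tableau k n L0 T"
  unfolding has_summing_tableau_def
proof (intro allI impI)
  fix a b assume ab: "1 \<le> a \<and> a \<le> k \<and> 1 \<le> b \<and> b \<le> n - k"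
  have "summing_tableau L0 a b = length (filter (\<lambda>m. ent (f m) a \<le> a + b - 1) [1..<Suc N])"
    unfolding summing_tableau_def L0_def filter_mset_image_mset size_image_mset size_filter_mset_list by (rule refl)
  also have "filter (\<lambda>m. ent (f m) a \<le> a + b - 1) [1..<Suc N] = filter (\<lambda>m. m \<le> T a b) [1..<Suc N]"
  proof (rule filter_cong[OF refl])
    fix m
    have "ent (f m) a \<le> a + b - 1 \<longleftrightarrow> r a m < b" using ab f_ent[of a m] by linarith
    then show "(ent (f m) a \<le> a + b - 1) = (m \<le> T a b)" using r_key[of a b m] ab by simp
  qed
  also have "\<dots> = [1..<Suc (T a b)]" using T_le_N[of a b] ab filter_le_upt[of "T a b" N] by (simp add: min_def del: upt_Suc)
  finally show "summing_tableau L0 a b = T a b" by simp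
qed

lemma L0_V: "set_mset L0 \<subseteq> Vstar k n"
  unfolding L0_def using f_Vstar by auto

lemma L0_cle: "\<forall>I\<in>#L0. \<forall>J\<in>#L0. cle k I J \<or> cle k J I"
proof (intro ballI)
  fix I J assume "I \<in># L0" "J \<in># L0"
  then obtain m m' where "I = f m" "J = f m'" unfolding L0_def by auto
  then show "cle k I J \<or> cle k J I" using f_cle nat_le_linear[of m m'] by auto
qed

end


definition ok :: "nat \<Rightarrow> nat list multiset \<Rightarrow> bool" where
  "ok k L \<longleftrightarrow> (\<forall>I\<in>#L. length I = k \<and> sorted_wrt (<) I)"

definition NC :: "nat \<Rightarrow> nat list multiset \<Rightarrow> bool" where
  "NC k L \<longleftrightarrow> (\<forall>I\<in>#L. \<forall>J\<in>#L. noncrossing k I J)"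

lemma ent_snoc: "1 \<le> l \<Longrightarrow> l \<le> length I \<Longrightarrow> ent (I @ [x]) l = ent I l"
  by (simp add: ent_def nth_append, linarith)

lemma ent_snoc_last: "length I = k \<Longrightarrow> ent (I @ [x]) (Suc k) = x"
  by (simp add: ent_def nth_append)

lemma nc_snoc:
  assumes "length I = k" "length J = k"
  shows "noncrossing (Suc k) (I @ [x]) (J @ [y]) \<longleftrightarrow> noncrossing k I J \<and>
    (\<forall>a. 1 \<le> a \<and> a \<le> k \<and> (\<forall>l. a < l \<and> l \<le> k \<longrightarrow> ent I l = ent J l) \<longrightarrow>
       \<not> arcs_cross (ent I a) x (ent J a) y)"
  (is "?L \<longleftrightarrow> ?A \<and> ?B")
proof
  assume L: ?L
  show "?A \<and> ?B"
  proof
    show ?A unfolding noncrossing_def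
    proof (intro allI impI)
      fix a b assume ab: "1 \<le> a \<and> a < b \<and> b \<le> k \<and> (\<forall>l. a < l \<and> l < b \<longrightarrow> ent I l = ent J l)"
      have "\<forall>l. a < l \<and> l < b \<longrightarrow> ent (I@[x]) l = ent (J@[y]) l"
        using ab assms by (auto simp: ent_snoc)
      then have "\<not> arcs_cross (ent (I@[x]) a) (ent (I@[x]) b) (ent (J@[y]) a) (ent (J@[y]) b)"
        using L ab unfolding noncrossing_def by auto
      then show "\<not> arcs_cross (ent I a) (ent I b) (ent J a) (ent J b)"
        using ab assms by (simp add: ent_snoc)
    qed
    show ?B
    proof (intro allI impI)
      fix a assume a: "1 \<le> a \<and> a \<le> k \<and> (\<forall>l. a < l \<and> l \<le> k \<longrightarrow> ent I l = ent J l)"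
      have "\<forall>l. a < l \<and> l < Suc k \<longrightarrow> ent (I@[x]) l = ent (J@[y]) l"
        using a assms by (auto simp: ent_snoc)
      then have "\<not> arcs_cross (ent (I@[x]) a) (ent (I@[x]) (Suc k)) (ent (J@[y]) a) (ent (J@[y]) (Suc k))"
        using L a unfolding noncrossing_def by auto
      then show "\<not> arcs_cross (ent I a) x (ent J a) y"
        using a assms by (simp add: ent_snoc ent_snoc_last)
    qed
  qed
next
  assume R: "?A \<and> ?B"
  show ?L unfolding noncrossing_def
  proof (intro allI impI)
    fix a b assume ab: "1 \<le> a \<and> a < b \<and> b \<le> Suc k \<and> (\<forall>l. a < l \<and> l < b \<longrightarrow> ent (I@[x]) l = ent (J@[y]) l)"
    show "\<not> arcs_cross (ent (I@[x]) a) (ent (I@[x]) b) (ent (J@[y]) a) (ent (J@[y]) b)"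
    proof (cases "b = Suc k")
      case True
      have "\<forall>l. a < l \<and> l \<le> k \<longrightarrow> ent I l = ent J l"
        using ab assms True by (auto simp: ent_snoc)
      then have "\<not> arcs_cross (ent I a) x (ent J a) y" using R ab True by auto
      then show ?thesis using ab assms True by (simp add: ent_snoc ent_snoc_last)
    next
      case False
      have "\<forall>l. a < l \<and> l < b \<longrightarrow> ent I l = ent J l"
        using ab assms False by (auto simp: ent_snoc)
      then have "\<not> arcs_cross (ent I a) (ent I b) (ent J a) (ent J b)" using R ab False unfolding noncrossing_def by auto
      then show ?thesis using ab assms False by (simp add: ent_snoc)
    qed
  qed
qed

lemma nc_sym: "noncrossing k I J \<Longrightarrow> noncrossing k J I"
  unfolding noncrossing_def arcs_cross_def by metis

lemma nc_refl: "noncrossing k I I"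
  unfolding noncrossing_def arcs_cross_def by auto

lemma revmax:
  "finite S \<Longrightarrow> S \<noteq> {} \<Longrightarrow> \<forall>Q\<in>S. length Q = k \<Longrightarrow>
   \<exists>P0\<in>S. \<forall>Q\<in>S. Q = P0 \<or> (\<exists>d. 1 \<le> d \<and> d \<le> k \<and> ent Q d < ent P0 d \<and> (\<forall>l. d < l \<and> l \<le> k \<longrightarrow> ent Q l = ent P0 l))"
proof (induction k arbitrary: S)
  case 0
  then obtain P where "P \<in> S" by auto
  have "\<forall>Q\<in>S. Q = P" using 0(3) \<open>P \<in> S\<close> by (metis length_0_conv)
  then show ?case using \<open>P \<in> S\<close> by blast
next
  case (Suc k)
  define c where "c = Max (last ` S)"
  have cin: "c \<in> last ` S" unfolding c_def using Suc.prems by (intro Max_in) auto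
  have cge: "last Q \<le> c" if "Q \<in> S" for Q unfolding c_def using Suc.prems that by (intro Max_ge) auto
  define S' where "S' = butlast ` {Q\<in>S. last Q = c}"
  have decomp: "Q = butlast Q @ [last Q]" if "Q \<in> S" for Q
    using Suc.prems that by (intro append_butlast_last_id[symmetric]) auto
  have "finite S'" "S' \<noteq> {}" "\<forall>Q\<in>S'. length Q = k" using Suc.prems cin by (auto simp: S'_def)
  from Suc.IH[OF this] obtain P0' where P0': "P0' \<in> S'"
    "\<forall>Q\<in>S'. Q = P0' \<or> (\<exists>d. 1 \<le> d \<and> d \<le> k \<and> ent Q d < ent P0' d \<and> (\<forall>l. d < l \<and> l \<le> k \<longrightarrow> ent Q l = ent P0' l))"
    by blast
  obtain Q0 where Q0: "Q0 \<in> S" "last Q0 = c" "P0' = butlast Q0" using P0'(1) by (auto simp: S'_def)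
  have P0S: "P0' @ [c] \<in> S" using Q0 decomp by metis
  have lP0': "length P0' = k" using \<open>\<forall>Q\<in>S'. length Q = k\<close> P0' by auto
  show ?case
  proof (intro bexI[OF _ P0S] ballI)
    fix Q assume Q: "Q \<in> S"
    have lQ: "length (butlast Q) = k" using Suc.prems Q by auto
    show "Q = P0' @ [c] \<or> (\<exists>d. 1 \<le> d \<and> d \<le> Suc k \<and> ent Q d < ent (P0' @ [c]) d \<and>
            (\<forall>l. d < l \<and> l \<le> Suc k \<longrightarrow> ent Q l = ent (P0' @ [c]) l))"
    proof (cases "last Q = c")
      case False
      then have "last Q < c" using cge Q by force
      moreover have "ent Q (Suc k) = last Q" using decomp[OF Q] ent_snoc_last[OF lQ] by metis
      ultimately show ?thesis using ent_snoc_last[OF lP0'] by (intro disjI2 exI[of _ "Suc k"]) auto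
    next
      case True
      then have "butlast Q \<in> S'" using Q by (auto simp: S'_def)
      then consider "butlast Q = P0'" | d where "1 \<le> d" "d \<le> k" "ent (butlast Q) d < ent P0' d"
        "\<forall>l. d < l \<and> l \<le> k \<longrightarrow> ent (butlast Q) l = ent P0' l" using P0'(2) by blast
      then show ?thesis
      proof cases
        case 1 then show ?thesis using decomp[OF Q] True by auto
      next
        case 2
        have eQ: "ent Q l = ent (butlast Q @ [c]) l" for l using decomp[OF Q] True by metis
        show ?thesis
        proof (intro disjI2 exI[of _ d] conjI allI impI)
          show "1 \<le> d" "d \<le> Suc k" using 2 by auto
          show "ent Q d < ent (P0' @ [c]) d" using 2 lQ lP0' by (simp add: eQ ent_snoc)
          fix l assume l: "d < l \<and> l \<le> Suc k"
          show "ent Q l = ent (P0' @ [c]) l"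
          proof (cases "l = Suc k")
            case True then show ?thesis using lQ lP0' by (simp add: eQ ent_snoc_last)
          next
            case False then show ?thesis using l 2 lQ lP0' by (simp add: eQ ent_snoc)
          qed
        qed
      qed
    qed
  qed
qed


lemma snoc_facts:
  assumes "length I = Suc k" "sorted_wrt (<) I"
  shows "I = butlast I @ [last I]" "length (butlast I) = k" "sorted_wrt (<) (butlast I)"
    "\<forall>y\<in>set (butlast I). y < last I"
proof -
  show d: "I = butlast I @ [last I]" using assms by (intro append_butlast_last_id[symmetric]) auto
  show "length (butlast I) = k" using assms by simp
  have "sorted_wrt (<) (butlast I @ [last I])" using assms d by metis
  then show "sorted_wrt (<) (butlast I)" "\<forall>y\<in>set (butlast I). y < last I"
    by (auto simp: sorted_wrt_append)
qed

lemma ent_le_last: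
  assumes "sorted_wrt (<) P" "length P = k" "1 \<le> d" "d \<le> k"
  shows "ent P d \<le> ent P k"
  using ent_mono_sorted[OF assms(1,2), of d k] assms by (cases "d = k") auto

lemma set_le_last:
  assumes "sorted_wrt (<) P" "length P = k" "y \<in> set P"
  shows "y \<le> ent P k"
proof -
  obtain i where i: "i < k" "y = P ! i" using assms by (auto simp: in_set_conv_nth)
  then have "y = ent P (Suc i)" by (simp add: ent_def)
  then show ?thesis using ent_le_last[OF assms(1,2), of "Suc i"] i by simp
qed

definition revmaxp :: "nat \<Rightarrow> nat list \<Rightarrow> nat list set \<Rightarrow> bool" where
  "revmaxp k P0 S \<longleftrightarrow> P0 \<in> S \<and> (\<forall>Q\<in>S. Q = P0 \<or> (\<exists>d. 1 \<le> d \<and> d \<le> k \<and> ent Q d < ent P0 d \<and> (\<forall>l. d < l \<and> l \<le> k \<longrightarrow> ent Q l = ent P0 l)))"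

lemma revmaxp_ex: "finite S \<Longrightarrow> S \<noteq> {} \<Longrightarrow> \<forall>Q\<in>S. length Q = k \<Longrightarrow> \<exists>P0. revmaxp k P0 S"
  using revmax unfolding revmaxp_def by blast

lemma revmaxp_last:
  assumes "revmaxp k P0 S" "Q \<in> S" "1 \<le> k"
  shows "ent Q k \<le> ent P0 k"
proof -
  from assms consider "Q = P0" | d where "1 \<le> d" "d \<le> k" "ent Q d < ent P0 d" "\<forall>l. d < l \<and> l \<le> k \<longrightarrow> ent Q l = ent P0 l"
    unfolding revmaxp_def by blast
  then show ?thesis
  proof cases
    case 1 then show ?thesis by simp
  next
    case 2 then show ?thesis by (cases "d = k") auto
  qed
qed

lemma key_elem:
  assumes k: "1 \<le> k" and okL: "ok (Suc k) L" and nc: "NC (Suc k) L"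
    and rm: "revmaxp k P0 (set_mset (image_mset butlast L))"
    and x1: "x1 = Min {x \<in> set_mset (image_mset last L). ent P0 k < x}"
  shows "P0 @ [x1] \<in># L"
proof -
  define c where "c = ent P0 k"
  obtain I0 where I0: "I0 \<in># L" "butlast I0 = P0" using rm unfolding revmaxp_def by auto
  have lI0: "length I0 = Suc k" "sorted_wrt (<) I0" using okL I0 by (auto simp: ok_def)
  note sf = snoc_facts[OF lI0]
  define x0 where "x0 = last I0"
  have I0eq: "I0 = P0 @ [x0]" using sf I0 x0_def by simp
  have lP0: "length P0 = k" "sorted_wrt (<) P0" using sf I0 by auto
  have "ent P0 k \<in> set P0" using lP0 k by (auto simp: ent_def)
  then have cx0: "c < x0" using sf I0 x0_def c_def by auto
  define X where "X = {x \<in> set_mset (image_mset last L). c < x}"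
  have X: "finite X" "x0 \<in> X" using I0 cx0 by (auto simp: X_def x0_def)
  have x1M: "x1 = Min X" unfolding x1 c_def[symmetric] X_def by simp
  have x1X: "x1 \<in> X" "x1 \<le> x0" using X unfolding x1M by (auto intro: Min_in)
  show ?thesis
  proof (cases "x1 = x0")
    case True then show ?thesis using I0 I0eq by simp
  next
    case False
    then have lt: "x1 < x0" using x1X by simp
    obtain J where J: "J \<in># L" "last J = x1" using x1X by (auto simp: X_def)
    have lJ: "length J = Suc k" "sorted_wrt (<) J" using okL J by (auto simp: ok_def)
    note sJ = snoc_facts[OF lJ]
    define Q where "Q = butlast J"
    have Jeq: "J = Q @ [x1]" using sJ J Q_def by simp
    have QS: "Q \<in> set_mset (image_mset butlast L)" using J Q_def by auto
    from rm QS consider "Q = P0" | d where "1 \<le> d" "d \<le> k" "ent Q d < ent P0 d" "\<forall>l. d < l \<and> l \<le> k \<longrightarrow> ent Q l = ent P0 l"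
      unfolding revmaxp_def by blast
    then show ?thesis
    proof cases
      case 1 then show ?thesis using J Jeq by simp
    next
      case 2
      have "noncrossing (Suc k) (Q @ [x1]) (P0 @ [x0])" using nc J I0 Jeq I0eq unfolding NC_def by metis
      then have "\<not> arcs_cross (ent Q d) x1 (ent P0 d) x0"
        using nc_snoc[of Q k P0 x1 x0] sJ Q_def lP0 2 by auto
      moreover have "ent P0 d \<le> c" using ent_le_last[OF lP0(2,1) 2(1,2)] c_def by simp
      moreover have "c < x1" using x1X by (simp add: X_def)
      ultimately show ?thesis using 2 lt unfolding arcs_cross_def by auto
    qed
  qed
qed

lemma ext_unique:
  "1 \<le> k \<Longrightarrow> ok (Suc k) L \<Longrightarrow> ok (Suc k) L' \<Longrightarrow> NC (Suc k) L \<Longrightarrow> NC (Suc k) L' \<Longrightarrow>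
   image_mset butlast L = image_mset butlast L' \<Longrightarrow> image_mset last L = image_mset last L' \<Longrightarrow> L = L'"
proof (induction "size L" arbitrary: L L')
  case 0 then show ?case by (metis size_eq_0_iff_empty size_image_mset)
next
  case (Suc s)
  have "set_mset (image_mset butlast L) \<noteq> {}" using Suc.hyps(2) by auto
  moreover have "\<forall>Q\<in>set_mset (image_mset butlast L). length Q = k" using Suc.prems(2) by (auto simp: ok_def)
  ultimately obtain P0 where rm: "revmaxp k P0 (set_mset (image_mset butlast L))"
    using revmaxp_ex by blast
  define x1 where "x1 = Min {x \<in> set_mset (image_mset last L). ent P0 k < x}"
  have e1: "P0 @ [x1] \<in># L" using key_elem[OF Suc.prems(1,2,4) rm x1_def] .
  have e2: "P0 @ [x1] \<in># L'" using key_elem[OF Suc.prems(1,3,5), of P0 x1] rm x1_def Suc.prems(6,7) by simp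
  obtain L0 where L0: "L = add_mset (P0 @ [x1]) L0" using e1 by (metis multi_member_split)
  obtain L0' where L0': "L' = add_mset (P0 @ [x1]) L0'" using e2 by (metis multi_member_split)
  have "L0 = L0'"
  proof (rule Suc.hyps(1))
    show "s = size L0" using Suc.hyps(2) L0 by simp
    show "1 \<le> k" by fact
    show "ok (Suc k) L0" "ok (Suc k) L0'" using Suc.prems(2,3) L0 L0' by (auto simp: ok_def)
    show "NC (Suc k) L0" "NC (Suc k) L0'" using Suc.prems(4,5) L0 L0' by (auto simp: NC_def)
    show "image_mset butlast L0 = image_mset butlast L0'" using Suc.prems(6) L0 L0' by simp
    show "image_mset last L0 = image_mset last L0'" using Suc.prems(7) L0 L0' by simp
  qed
  then show ?case using L0 L0' by simp
qed


lemma ext_exists: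
  "1 \<le> k \<Longrightarrow> ok k P \<Longrightarrow> NC k P \<Longrightarrow> size B = size P \<Longrightarrow>
   (\<forall>t. size (filter_mset (\<lambda>x. x \<le> t) B) \<le> size (filter_mset (\<lambda>x. x < t) (col k P))) \<Longrightarrow>
   \<exists>L. ok (Suc k) L \<and> NC (Suc k) L \<and> image_mset butlast L = P \<and> image_mset last L = B"
proof (induction "size P" arbitrary: P B)
  case 0 then show ?case by (intro exI[of _ "{#}"]) (auto simp: ok_def NC_def)
next
  case (Suc s)
  note k = Suc.prems(1)
  have "set_mset P \<noteq> {}" "finite (set_mset P)" using Suc.hyps(2) by auto
  moreover have "\<forall>Q\<in>set_mset P. length Q = k" using Suc.prems(2) by (auto simp: ok_def)
  ultimately obtain P0 where rm: "revmaxp k P0 (set_mset P)" using revmaxp_ex by blast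
  define c where "c = ent P0 k"
  have P0P: "P0 \<in># P" using rm by (simp add: revmaxp_def)
  obtain P1 where P1: "P = add_mset P0 P1" using P0P by (metis multi_member_split)
  have lP0: "length P0 = k" "sorted_wrt (<) P0" using Suc.prems(2) P0P by (auto simp: ok_def)
  have colP: "col k P = add_mset c (col k P1)" using P1 by (simp add: col_def c_def)
  have A1le: "x \<le> c" if "x \<in># col k P1" for x
    using that revmaxp_last[OF rm _ k] P1 by (auto simp: col_def c_def)
  have H: "size (filter_mset (\<lambda>x. x \<le> t) B) \<le> size (filter_mset (\<lambda>x. x < t) (col k P))" for t
    using Suc.prems(5) by blast
  have "\<exists>x\<in>#B. c < x"
  proof (rule ccontr)
    assume "\<not> ?thesis"
    then have "size (filter_mset (\<lambda>x. x \<le> c) B) = size B" by (intro size_filter_all) auto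
    moreover have "size (filter_mset (\<lambda>x. x < c) (col k P)) \<le> size (col k P1)" using colP by simp
    moreover have "size (col k P1) < size P" using P1 by (simp add: col_def)
    ultimately show False using H[of c] Suc.prems(4) by simp
  qed
  define X where "X = {x \<in> set_mset B. c < x}"
  define x1 where "x1 = Min X"
  have X: "finite X" "X \<noteq> {}" using \<open>\<exists>x\<in>#B. c < x\<close> by (auto simp: X_def)
  have x1X: "x1 \<in># B" "c < x1" using Min_in[OF X] by (auto simp: x1_def X_def)
  have x1min: "x1 \<le> y" if "y \<in># B" "c < y" for y using X that by (auto simp: x1_def X_def)
  obtain B1 where B1: "B = add_mset x1 B1" using x1X by (metis multi_member_split)
  have feas: "size (filter_mset (\<lambda>x. x \<le> t) B1) \<le> size (filter_mset (\<lambda>x. x < t) (col k P1))" for t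
  proof -
    have Ht: "size (filter_mset (\<lambda>x. x \<le> t) (add_mset x1 B1)) \<le> size (filter_mset (\<lambda>x. x < t) (add_mset c (col k P1)))"
      using H[of t] B1 colP by simp
    consider "t \<le> c" | "c < t" "t < x1" | "x1 \<le> t" by linarith
    then show ?thesis
    proof cases
      case 1 then show ?thesis using Ht x1X by simp
    next
      case 2
      have "filter_mset (\<lambda>x. x \<le> t) B1 = filter_mset (\<lambda>x. x \<le> c) B1"
      proof (rule filter_mset_cong[OF refl])
        fix y assume "y \<in># B1"
        then have "y \<in># B" using B1 by simp
        then show "(y \<le> t) = (y \<le> c)" using x1min[of y] 2 by (cases "c < y") auto
      qed
      moreover have "size (filter_mset (\<lambda>x. x \<le> c) (add_mset x1 B1)) \<le> size (filter_mset (\<lambda>x. x < c) (add_mset c (col k P1)))"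
        using H[of c] B1 colP by simp
      moreover have "size (filter_mset (\<lambda>x. x < t) (col k P1)) = size (col k P1)"
        using A1le 2 by (intro size_filter_all) force
      ultimately show ?thesis using x1X by (simp add: le_trans[OF _ size_filter_mset_lesseq])
    next
      case 3 then show ?thesis using Ht x1X by simp
    qed
  qed
  obtain L1 where L1: "ok (Suc k) L1" "NC (Suc k) L1" "image_mset butlast L1 = P1" "image_mset last L1 = B1"
  proof -
    have "\<exists>L. ok (Suc k) L \<and> NC (Suc k) L \<and> image_mset butlast L = P1 \<and> image_mset last L = B1"
    proof (rule Suc.hyps(1))
      show "s = size P1" using Suc.hyps(2) P1 by simp
      show "1 \<le> k" by fact
      show "ok k P1" using Suc.prems(2) P1 by (simp add: ok_def)
      show "NC k P1" using Suc.prems(3) P1 by (simp add: NC_def)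
      show "size B1 = size P1" using Suc.prems(4) P1 B1 by simp
      show "\<forall>t. size (filter_mset (\<lambda>x. x \<le> t) B1) \<le> size (filter_mset (\<lambda>x. x < t) (col k P1))" using feas by blast
    qed
    then show ?thesis using that by blast
  qed
  define e where "e = P0 @ [x1]"
  have cP0: "c \<in> set P0" using lP0 k by (auto simp: c_def ent_def)
  have e_ok: "length e = Suc k" "sorted_wrt (<) e"
    using lP0 set_le_last[OF lP0(2,1)] x1X by (auto simp: e_def sorted_wrt_append c_def intro: le_less_trans)
  have cross_ok: "noncrossing (Suc k) J e" if J: "J \<in># L1" for J
  proof -
    have lJ: "length J = Suc k" "sorted_wrt (<) J" using L1(1) J by (auto simp: ok_def)
    note sJ = snoc_facts[OF lJ]
    define Q where "Q = butlast J"
    define y where "y = last J"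
    have Jeq: "J = Q @ [y]" using sJ Q_def y_def by simp
    have QP: "Q \<in># P" using J L1(3) P1 Q_def by auto
    have yB: "y \<in># B" using J L1(4) B1 y_def by auto
    have lQ: "length Q = k" using sJ Q_def by simp
    have yQ: "ent Q k < y" using sJ Q_def y_def lQ k by (auto simp: ent_def)
    have nQ: "noncrossing k Q P0" using Suc.prems(3) QP P0P by (auto simp: NC_def)
    have "\<forall>a. 1 \<le> a \<and> a \<le> k \<and> (\<forall>l. a < l \<and> l \<le> k \<longrightarrow> ent Q l = ent P0 l) \<longrightarrow>
       \<not> arcs_cross (ent Q a) y (ent P0 a) x1"
    proof (intro allI impI)
      fix a assume a: "1 \<le> a \<and> a \<le> k \<and> (\<forall>l. a < l \<and> l \<le> k \<longrightarrow> ent Q l = ent P0 l)"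
      from rm QP consider "Q = P0" | d where "1 \<le> d" "d \<le> k" "ent Q d < ent P0 d" "\<forall>l. d < l \<and> l \<le> k \<longrightarrow> ent Q l = ent P0 l"
        unfolding revmaxp_def by auto
      then show "\<not> arcs_cross (ent Q a) y (ent P0 a) x1"
      proof cases
        case 1 then show ?thesis by (simp add: arcs_cross_def)
      next
        case 2
        consider "a < d" | "a = d" | "d < a" by linarith
        then show ?thesis
        proof cases
          case 1 then show ?thesis using a 2 by auto
        next
          case 3
          then have "ent Q a = ent P0 a" using a 2 by auto
          then show ?thesis by (simp add: arcs_cross_def)
        next
          case ad: 2
          have "\<not> (ent P0 d < y \<and> y < x1)"
          proof
            assume h: "ent P0 d < y \<and> y < x1"
            then have "y \<le> c" using x1min[OF yB] by (cases "c < y") auto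
            show False
            proof (cases "d = k")
              case True then show False using h \<open>y \<le> c\<close> c_def by simp
            next
              case False
              then have "ent Q k = c" using 2 c_def by auto
              then show False using yQ \<open>y \<le> c\<close> by simp
            qed
          qed
          then show ?thesis using 2 ad unfolding arcs_cross_def by auto
        qed
      qed
    qed
    then show ?thesis using nc_snoc[OF lQ lP0(1)] nQ Jeq e_def by simp
  qed
  show ?case
  proof (intro exI[of _ "add_mset e L1"] conjI)
    show "ok (Suc k) (add_mset e L1)" using L1(1) e_ok by (simp add: ok_def)
    show "image_mset butlast (add_mset e L1) = P" using L1(3) P1 by (simp add: e_def)
    show "image_mset last (add_mset e L1) = B" using L1(4) B1 by (simp add: e_def)
    show "NC (Suc k) (add_mset e L1)"
      unfolding NC_def using L1(2) cross_ok nc_sym nc_refl by (auto simp: NC_def)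
  qed
qed


lemma ok_butlast: "ok (Suc k) L \<Longrightarrow> ok k (image_mset butlast L)"
  unfolding ok_def
proof (intro ballI)
  fix P assume "\<forall>I\<in>#L. length I = Suc k \<and> sorted_wrt (<) I" "P \<in># image_mset butlast L"
  then obtain I where "I \<in># L" "P = butlast I" "length I = Suc k" "sorted_wrt (<) I" by auto
  then show "length P = k \<and> sorted_wrt (<) P" using snoc_facts(2,3)[of I k] by simp
qed

lemma NC_butlast: assumes "ok (Suc k) L" "NC (Suc k) L" shows "NC k (image_mset butlast L)"
  unfolding NC_def
proof (intro ballI)
  fix P Q assume "P \<in># image_mset butlast L" "Q \<in># image_mset butlast L"
  then obtain I J where IJ: "I \<in># L" "J \<in># L" "P = butlast I" "Q = butlast J" by auto
  have sI: "I = butlast I @ [last I]" "length (butlast I) = k" and sJ: "J = butlast J @ [last J]" "length (butlast J) = k"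
  proof -
    have "length I = Suc k" "sorted_wrt (<) I" "length J = Suc k" "sorted_wrt (<) J"
      using assms(1) IJ unfolding ok_def by auto
    then show "I = butlast I @ [last I]" "length (butlast I) = k" "J = butlast J @ [last J]" "length (butlast J) = k"
      using snoc_facts(1,2) by blast+
  qed
  have "noncrossing (Suc k) I J" using assms(2) IJ by (simp add: NC_def)
  then have "noncrossing (Suc k) (butlast I @ [last I]) (butlast J @ [last J])" using sI sJ by metis
  then show "noncrossing k P Q" using nc_snoc[OF sI(2) sJ(2)] IJ by simp
qed

lemma ent_butlast: "length I = Suc k \<Longrightarrow> 1 \<le> a \<Longrightarrow> a \<le> k \<Longrightarrow> ent (butlast I) a = ent I a"
  by (simp add: ent_def nth_butlast)

lemma col_butlast: "ok (Suc k) L \<Longrightarrow> 1 \<le> a \<Longrightarrow> a \<le> k \<Longrightarrow> col a (image_mset butlast L) = col a L"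
  unfolding col_def ok_def image_mset.compositionality o_def
  by (intro image_mset_cong) (simp add: ent_butlast)

lemma col_last: "ok (Suc k) L \<Longrightarrow> col (Suc k) L = image_mset last L"
  unfolding col_def ok_def
proof (intro image_mset_cong)
  fix I assume "\<forall>I\<in>#L. length I = Suc k \<and> sorted_wrt (<) I" "I \<in># L"
  then have "length I = Suc k" by auto
  then have "I \<noteq> []" by auto
  then show "ent I (Suc k) = last I" using last_conv_nth[of I] \<open>length I = Suc k\<close> by (simp add: ent_def)
qed

lemma NC_le1: "k \<le> 1 \<Longrightarrow> NC k L"
  unfolding NC_def noncrossing_def by auto

lemma NCE: "ok k L \<Longrightarrow> \<exists>L'. ok k L' \<and> NC k L' \<and> (\<forall>a. 1 \<le> a \<and> a \<le> k \<longrightarrow> col a L' = col a L) \<and> size L' = size L"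
proof (induction k arbitrary: L)
  case 0 then show ?case using NC_le1 by blast
next
  case (Suc k)
  show ?case
  proof (cases "k = 0")
    case True
    then have "NC (Suc k) L" using NC_le1 by simp
    then show ?thesis using Suc.prems by blast
  next
    case False
    then have k: "1 \<le> k" by simp
    define P where "P = image_mset butlast L"
    define B where "B = image_mset last L"
    have okP: "ok k P" using ok_butlast[OF Suc.prems] P_def by simp
    obtain P' where P': "ok k P'" "NC k P'" "\<forall>a. 1 \<le> a \<and> a \<le> k \<longrightarrow> col a P' = col a P" "size P' = size P"
      using Suc.IH[OF okP] by blast
    have feas: "\<forall>t. size (filter_mset (\<lambda>x. x \<le> t) B) \<le> size (filter_mset (\<lambda>x. x < t) (col k P'))"
    proof
      fix t
      have "col k P' = image_mset (\<lambda>I. ent (butlast I) k) L" using P'(3) k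
        by (simp add: P_def col_def image_mset.compositionality o_def)
      then have "size (filter_mset (\<lambda>x. x < t) (col k P')) = size (filter_mset (\<lambda>I. ent (butlast I) k < t) L)"
        by (simp add: filter_mset_image_mset)
      moreover have "size (filter_mset (\<lambda>x. x \<le> t) B) = size (filter_mset (\<lambda>I. last I \<le> t) L)"
        by (simp add: B_def filter_mset_image_mset)
      moreover have "size (filter_mset (\<lambda>I. last I \<le> t) L) \<le> size (filter_mset (\<lambda>I. ent (butlast I) k < t) L)"
      proof (rule size_filter_mono)
        fix I assume I: "I \<in># L" "last I \<le> t"
        have lI: "length I = Suc k" "sorted_wrt (<) I" using Suc.prems I by (auto simp: ok_def)
        have "ent (butlast I) k \<in> set (butlast I)" using snoc_facts(2)[OF lI] k by (auto simp: ent_def)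
        then have "ent (butlast I) k < last I" using snoc_facts(4)[OF lI] by blast
        then show "ent (butlast I) k < t" using I by simp
      qed
      ultimately show "size (filter_mset (\<lambda>x. x \<le> t) B) \<le> size (filter_mset (\<lambda>x. x < t) (col k P'))" by simp
    qed
    have sz: "size B = size P'" using P'(4) by (simp add: B_def P_def)
    obtain L' where L': "ok (Suc k) L'" "NC (Suc k) L'" "image_mset butlast L' = P'" "image_mset last L' = B"
      using ext_exists[OF k P'(1,2) sz feas] by blast
    show ?thesis
    proof (intro exI[of _ L'] conjI allI impI)
      show "ok (Suc k) L'" "NC (Suc k) L'" by (fact L')+
      show "size L' = size L" using L'(4) by (metis B_def size_image_mset)
      fix a assume a: "1 \<le> a \<and> a \<le> Suc k"
      show "col a L' = col a L"
      proof (cases "a = Suc k")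
        case True then show ?thesis using col_last[OF L'(1)] col_last[OF Suc.prems] L'(4) B_def by simp
      next
        case False
        then have "col a L' = col a P'" using col_butlast[OF L'(1), of a] a L'(3) by simp
        also have "\<dots> = col a P" using P'(3) a False by simp
        also have "\<dots> = col a L" using col_butlast[OF Suc.prems, of a] a False P_def by simp
        finally show ?thesis .
      qed
    qed
  qed
qed

lemma all_eq_replicate: "(\<forall>x\<in>#M. x = c) \<Longrightarrow> M = replicate_mset (size M) c"
  by (induction M) auto

lemma NCU: "ok k L \<Longrightarrow> ok k L' \<Longrightarrow> NC k L \<Longrightarrow> NC k L' \<Longrightarrow> (\<forall>a. 1 \<le> a \<and> a \<le> k \<longrightarrow> col a L = col a L') \<Longrightarrow>
  size L = size L' \<Longrightarrow> L = L'"
proof (induction k arbitrary: L L')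
  case 0
  then have "\<forall>x\<in>#L. x = []" "\<forall>x\<in>#L'. x = []" by (auto simp: ok_def)
  then have "L = replicate_mset (size L) []" "L' = replicate_mset (size L') []"
    by (auto intro: all_eq_replicate)
  then show ?case using 0(6) by simp
next
  case (Suc k)
  show ?case
  proof (cases "k = 0")
    case True
    have r: "image_mset (\<lambda>x. [x]) (col 1 M) = M" if "ok (Suc 0) M" for M
    proof -
      have "image_mset (\<lambda>x. [x]) (col 1 M) = image_mset (\<lambda>I. [ent I 1]) M"
        by (simp add: col_def image_mset.compositionality o_def)
      also have "\<dots> = image_mset id M"
      proof (rule image_mset_cong)
        fix I assume "I \<in># M"
        then have "length I = 1" using that by (auto simp: ok_def)
        then show "[ent I 1] = id I" by (cases I) (auto simp: ent_def)
      qed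
      finally show ?thesis by simp
    qed
    have "col 1 L = col 1 L'" using Suc.prems(5) True by auto
    moreover have "ok (Suc 0) L" "ok (Suc 0) L'" using Suc.prems(1,2) True by auto
    ultimately show ?thesis using r[of L] r[of L'] by simp
  next
    case False
    then have k: "1 \<le> k" by simp
    have "image_mset butlast L = image_mset butlast L'"
    proof (rule Suc.IH)
      show "ok k (image_mset butlast L)" "ok k (image_mset butlast L')" using ok_butlast Suc.prems by auto
      show "NC k (image_mset butlast L)" "NC k (image_mset butlast L')" using NC_butlast Suc.prems by auto
      show "\<forall>a. 1 \<le> a \<and> a \<le> k \<longrightarrow> col a (image_mset butlast L) = col a (image_mset butlast L')"
        using col_butlast Suc.prems(1,2,5) by simp
      show "size (image_mset butlast L) = size (image_mset butlast L')" using Suc.prems(6) by simp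
    qed
    moreover have "image_mset last L = image_mset last L'"
      using col_last[OF Suc.prems(1)] col_last[OF Suc.prems(2)] Suc.prems(5) by simp
    ultimately show ?thesis using ext_unique[OF k Suc.prems(1-4)] by simp
  qed
qed


lemma V_ok: "set_mset L \<subseteq> Vstar k n \<Longrightarrow> ok k L"
  unfolding ok_def Vstar_def Vkn_def by auto

lemma V_chain: "set_mset L \<subseteq> Vstar k n \<Longrightarrow> \<forall>I\<in>#L. \<forall>J\<in>#L. nonnesting k I J \<Longrightarrow>
  \<forall>I\<in>#L. \<forall>J\<in>#L. cle k I J \<or> cle k J I"
proof (intro ballI)
  fix I J assume V: "set_mset L \<subseteq> Vstar k n" and nn: "\<forall>I\<in>#L. \<forall>J\<in>#L. nonnesting k I J"
    and IJ: "I \<in># L" "J \<in># L"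
  have "length I = k" "sorted_wrt (<) I" "length J = k" "sorted_wrt (<) J"
    using V_ok[OF V] IJ by (auto simp: ok_def)
  then show "cle k I J \<or> cle k J I" using nonnesting_cmp nn IJ by blast
qed

lemma lens: "set_mset L \<subseteq> Vstar k n \<Longrightarrow> \<forall>I\<in>#L. length I = k"
  using V_ok unfolding ok_def by blast

theorem theorem2p3:
  fixes k n :: nat and T :: "nat \<Rightarrow> nat \<Rightarrow> nat"
  assumes "1 \<le> k" and "k \<le> n - 1" and "is_tableau k n T"
  shows "(\<exists>!L. set_mset L \<subseteq> Vstar k n \<and>
              (\<forall>I\<in>#L. \<forall>J\<in>#L. nonnesting k I J) \<and> has_summing_tableau k n L T)
       \<and> (\<exists>!L. set_mset L \<subseteq> Vstar k n \<and>
              (\<forall>I\<in>#L. \<forall>J\<in>#L. noncrossing k I J) \<and> has_summing_tableau k n L T)"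
proof -
  interpret tab k n T using assms by unfold_locales
  have L0V: "set_mset L0 \<subseteq> Vstar k n" by (rule L0_V)
  have L0nn: "\<forall>I\<in>#L0. \<forall>J\<in>#L0. nonnesting k I J" using L0_cle cmp_nonnesting by blast
  have L0s: "has_summing_tableau k n L0 T" by (rule L0_sum)
  have part1: "\<exists>!L. set_mset L \<subseteq> Vstar k n \<and>
              (\<forall>I\<in>#L. \<forall>J\<in>#L. nonnesting k I J) \<and> has_summing_tableau k n L T"
  proof (rule ex1I[of _ L0])
    show "set_mset L0 \<subseteq> Vstar k n \<and> (\<forall>I\<in>#L0. \<forall>J\<in>#L0. nonnesting k I J) \<and> has_summing_tableau k n L0 T"
      using L0V L0nn L0s by blast
    fix L assume L: "set_mset L \<subseteq> Vstar k n \<and> (\<forall>I\<in>#L. \<forall>J\<in>#L. nonnesting k I J) \<and> has_summing_tableau k n L T"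
    note cd = coldet[OF conjunct1[OF L] L0V assms(1,2) conjunct2[OF conjunct2[OF L]] L0s]
    show "L = L0"
    proof (rule nn_unique)
      show "\<forall>I\<in>#L. length I = k" "\<forall>I\<in>#L0. length I = k" using lens L L0V by blast+
      show "\<forall>I\<in>#L. \<forall>J\<in>#L. cle k I J \<or> cle k J I" using V_chain L by blast
      show "\<forall>I\<in>#L0. \<forall>J\<in>#L0. cle k I J \<or> cle k J I" by (rule L0_cle)
      show "\<forall>a. 1 \<le> a \<and> a \<le> k \<longrightarrow> col a L = col a L0" using cd(2) by blast
      show "size L = size L0" by (rule cd(1))
    qed
  qed
  obtain L1 where L1: "ok k L1" "NC k L1" "\<forall>a. 1 \<le> a \<and> a \<le> k \<longrightarrow> col a L1 = col a L0" "size L1 = size L0"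
    using NCE[OF V_ok[OF L0V]] by blast
  have L1V: "set_mset L1 \<subseteq> Vstar k n"
  proof
    fix I assume I: "I \<in># L1"
    have lI: "length I = k" "sorted_wrt (<) I" using L1(1) I by (auto simp: ok_def)
    have inL0: "\<exists>J\<in>#L0. ent J a = ent I a" if "1 \<le> a" "a \<le> k" for a
    proof -
      have "ent I a \<in># col a L1" using I by (simp add: col_def)
      then have "ent I a \<in># col a L0" using L1(3) that by simp
      then show ?thesis by (auto simp: col_def)
    qed
    have "set I \<subseteq> {1..n}"
    proof
      fix x assume "x \<in> set I"
      then obtain i where i: "i < k" "x = I ! i" using lI by (auto simp: in_set_conv_nth)
      then have x: "x = ent I (Suc i)" by (simp add: ent_def)
      obtain J where J: "J \<in># L0" "ent J (Suc i) = x" using inL0[of "Suc i"] i x by auto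
      have "J \<in> Vkn k n" using J L0V by (auto simp: Vstar_def)
      then show "x \<in> {1..n}" using Vkn_ent_bounds[of J k n "Suc i"] J i by auto
    qed
    then have IV: "I \<in> Vkn k n" using lI by (simp add: Vkn_def)
    obtain J where J: "J \<in># L0" "ent J 1 = ent I 1" using inL0[of 1] assms(1) by auto
    have "ent I 1 \<le> n - k" using Vstar_first[of J k n] J L0V assms(1) by auto
    moreover have "ent [n - k + 1 ..< n + 1] 1 = n - k + 1" using assms by (simp add: ent_def del: upt_Suc)
    ultimately have "I \<noteq> [n - k + 1 ..< n + 1]" by auto
    then show "I \<in> Vstar k n" using IV by (simp add: Vstar_def)
  qed
  have L1s: "has_summing_tableau k n L1 T"
    using L0s L1(3) unfolding has_summing_tableau_def summing_col by simp
  have part2: "\<exists>!L. set_mset L \<subseteq> Vstar k n \<and>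
              (\<forall>I\<in>#L. \<forall>J\<in>#L. noncrossing k I J) \<and> has_summing_tableau k n L T"
  proof (rule ex1I[of _ L1])
    show "set_mset L1 \<subseteq> Vstar k n \<and> (\<forall>I\<in>#L1. \<forall>J\<in>#L1. noncrossing k I J) \<and> has_summing_tableau k n L1 T"
      using L1V L1(2) L1s by (simp add: NC_def)
    fix L assume L: "set_mset L \<subseteq> Vstar k n \<and> (\<forall>I\<in>#L. \<forall>J\<in>#L. noncrossing k I J) \<and> has_summing_tableau k n L T"
    note cd = coldet[OF conjunct1[OF L] L1V assms(1,2) conjunct2[OF conjunct2[OF L]] L1s]
    show "L = L1"
    proof (rule NCU)
      show "ok k L" using V_ok L by blast
      show "ok k L1" by (rule L1(1))
      show "NC k L" using L by (simp add: NC_def)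
      show "NC k L1" by (rule L1(2))
      show "\<forall>a. 1 \<le> a \<and> a \<le> k \<longrightarrow> col a L = col a L1" using cd(2) by blast
      show "size L = size L1" by (rule cd(1))
    qed
  qed
  show ?thesis using part1 part2 by blast
qed


end
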